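(* Let $\gamma$ be an arc-length parametrized curve in a $2$-dimensional real space form $M^2(G)$ with curvature $k$, and let $(T_{\mathcal{P},\gamma}(\Lambda_G),[\cdot,\cdot]_\gamma)$ and $\mathrm{der}^*(\mathcal{P})$ be as below. The map $\Phi_\gamma:T_{\mathcal{P},\gamma}(\Lambda_G)\to\mathrm{der}^*(\mathcal{P})$, $\Phi_\gamma(\mathbf{V})=\partial_{\mathbf{V}(k)}$, is a homomorphism of Lie algebras.
   Context: $\mathcal{P}=\mathbb{R}[k^{(m)}:m\in\mathbb{N}]$ (polynomials in $k$ and its arc-length derivatives), $\mathcal{P}_0$ those with zero constant term. For $a\in\mathcal{P}$, $\partial_a=\sum_{m\ge0}a^{(m)}\frac{\partial}{\partial k^{(m)}}$ is a derivation of $\mathcal{P}$; $\mathrm{der}^*(\mathcal{P})=\{\partial_a:a\in\mathcal{P}\}$ is a Lie algebra under the commutator, with $[\partial_a,\partial_b]=\partial_{\partial_ab-\partial_ba}$. Frenet frame $\{\mathbf{T},\mathbf{N}\}$ with $\nabla_{\mathbf{T}}\mathbf{T}=k\mathbf{N}$, $\nabla_{\mathbf{T}}\mathbf{N}=-k\mathbf{T}$. $T_{\mathcal{P},\gamma}(\Lambda_G)=\{\mathbf{V}=f\mathbf{T}+g\mathbf{N}: f,g\in\mathcal{P},\ f\in\mathcal{P}_0,\ f'=kg\}$. For $\mathbf{V}=f\mathbf{T}+g\mathbf{N}$ with $f,g\in\mathcal{P}$ put $\rho_{\mathbf{V}}=f'-kg$, $\varphi_{\mathbf{V}}=g'+kf$;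 $\mathbf{V}$ acts on $\mathcal{P}$ as the derivation with $\mathbf{V}(k)=\varphi_{\mathbf{V}}'-k\rho_{\mathbf{V}}+Gg$ and $\mathbf{V}(h')=\mathbf{V}(h)'+\rho_{\mathbf{V}}h'$ (so for $\mathbf{V}\in T_{\mathcal{P},\gamma}(\Lambda_G)$, $\mathbf{V}(k)=\varphi_{\mathbf{V}}'+Gg$). Define $D_{\mathbf{V}}\mathbf{W}=(\mathbf{V}(f_{\mathbf{W}})-g_{\mathbf{W}}\varphi_{\mathbf{V}})\mathbf{T}+(\mathbf{V}(g_{\mathbf{W}})+f_{\mathbf{W}}\varphi_{\mathbf{V}})\mathbf{N}$ for $\mathbf{W}=f_{\mathbf{W}}\mathbf{T}+g_{\mathbf{W}}\mathbf{N}$, and the Lie bracket $[\mathbf{V},\mathbf{W}]_\gamma=D_{\mathbf{V}}\mathbf{W}-D_{\mathbf{W}}\mathbf{V}$, under which $T_{\mathcal{P},\gamma}(\Lambda_G)$ is a Lie algebra. *)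

theory Defs
  imports Complex_Main "HOL-Library.Poly_Mapping"
begin

text \<open>The differential polynomial algebra P = R[k^(m) : m in N]: polynomials in the
countably many variables k^(0) = k, k^(1) = k', ...; a monomial is a finitely
supported exponent vector nat =>0 nat, a polynomial a finitely supported real
coefficient function on monomials (the standard multivariate polynomial encoding).\<close>

type_synonym dpoly = "(nat \<Rightarrow>\<^sub>0 nat) \<Rightarrow>\<^sub>0 real"

definition const :: "real \<Rightarrow> dpoly" where
  "const c = Poly_Mapping.single 0 c"

definition kvar :: "nat \<Rightarrow> dpoly" where
  "kvar m = Poly_Mapping.single (Poly_Mapping.single m 1) 1"

definition kk :: dpoly where
  "kk = kvar 0"

definition vars :: "dpoly \<Rightarrow> nat set" where
  "vars p = (\<Union>mon\<in>Poly_Mapping.keys p. Poly_Mapping.keys mon)"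

definition pdv :: "nat \<Rightarrow> dpoly \<Rightarrow> dpoly" where
  "pdv i p = (\<Sum>mon\<in>Poly_Mapping.keys p.
      Poly_Mapping.single (mon - Poly_Mapping.single i 1)
        (Poly_Mapping.lookup p mon * of_nat (Poly_Mapping.lookup mon i)))"

definition derivation_of :: "(nat \<Rightarrow> dpoly) \<Rightarrow> dpoly \<Rightarrow> dpoly" where
  "derivation_of e p = (\<Sum>i\<in>vars p. e i * pdv i p)"

text \<open>arc-length derivative h \<mapsto> h' (k^(m) \<mapsto> k^(m+1))\<close>
definition dd :: "dpoly \<Rightarrow> dpoly" where
  "dd = derivation_of (\<lambda>i. kvar (Suc i))"

definition pa :: "dpoly \<Rightarrow> dpoly \<Rightarrow> dpoly" where
  "pa a = derivation_of (\<lambda>m. (dd ^^ m) a)"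

text \<open>vector fields V = f T + g N are represented as the pair (f, g)\<close>
type_synonym vfield = "dpoly \<times> dpoly"

definition rho :: "vfield \<Rightarrow> dpoly" where
  "rho V = dd (fst V) - kk * snd V"

definition phi :: "vfield \<Rightarrow> dpoly" where
  "phi V = dd (snd V) + kk * fst V"

text \<open>V(k^(m)): V(k) = phi' - k rho + G g, V(h') = V(h)' + rho h'\<close>
fun Vk :: "real \<Rightarrow> vfield \<Rightarrow> nat \<Rightarrow> dpoly" where
  "Vk G V 0 = dd (phi V) - kk * rho V + const G * snd V"
| "Vk G V (Suc m) = dd (Vk G V m) + rho V * kvar (Suc m)"

definition Vact :: "real \<Rightarrow> vfield \<Rightarrow> dpoly \<Rightarrow> dpoly" where
  "Vact G V = derivation_of (Vk G V)"

definition TPG :: "vfield set" where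
  "TPG = {(f, g). Poly_Mapping.lookup f 0 = 0 \<and> dd f = kk * g}"

definition DV :: "real \<Rightarrow> vfield \<Rightarrow> vfield \<Rightarrow> vfield" where
  "DV G V W = (Vact G V (fst W) - snd W * phi V, Vact G V (snd W) + fst W * phi V)"

definition bracket :: "real \<Rightarrow> vfield \<Rightarrow> vfield \<Rightarrow> vfield" where
  "bracket G V W = (fst (DV G V W) - fst (DV G W V), snd (DV G V W) - snd (DV G W V))"

definition Phi :: "real \<Rightarrow> vfield \<Rightarrow> dpoly \<Rightarrow> dpoly" where
  "Phi G V = pa (Vact G V kk)"

end

theory Submission imports Defs begin

abbreviation "sg \<equiv> Poly_Mapping.single"
abbreviation "lk \<equiv> Poly_Mapping.lookup"
abbreviation "ky \<equiv> Poly_Mapping.keys"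

lemma pm_sum_single: "(\<Sum>m\<in>ky p. sg m (lk p m)) = (p::('a \<Rightarrow>\<^sub>0 'b::comm_monoid_add))"
proof (rule poly_mapping_eqI)
  fix k
  have "lk (\<Sum>m\<in>ky p. sg m (lk p m)) k = (\<Sum>m\<in>ky p. (lk p m when m = k))"
    by (simp add: lookup_sum lookup_single)
  also have "\<dots> = lk p k"
    by (cases "k \<in> ky p") (auto simp: when_def sum.delta' in_keys_iff)
  finally show "lk (\<Sum>m\<in>ky p. sg m (lk p m)) k = lk p k" .
qed

lemma pdv_superset:
  assumes "finite S" "ky p \<subseteq> S"
  shows "pdv i p = (\<Sum>mon\<in>S. sg (mon - sg i 1) (lk p mon * of_nat (lk mon i)))"
  unfolding pdv_def
  by (rule sum.mono_neutral_left) (use assms in \<open>auto simp: in_keys_iff\<close>)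

lemma pdv_add: "pdv i (p + q) = pdv i p + pdv i q"
proof -
  let ?S = "ky p \<union> ky q \<union> ky (p+q)"
  have f: "finite ?S" by simp
  show ?thesis
    apply (subst (1 2 3) pdv_superset[OF f])
    by (auto simp: lookup_add distrib_right single_add sum.distrib)
qed

lemma pdv_zero[simp]: "pdv i 0 = 0"
  by (simp add: pdv_def)

lemma pdv_sum: "pdv i (sum f A) = (\<Sum>a\<in>A. pdv i (f a))"
  by (induction A rule: infinite_finite_induct) (auto simp: pdv_add)

lemma pdv_single: "pdv i (sg m c) = sg (m - sg i 1) (c * of_nat (lk m i))"
  by (subst pdv_superset[of "{m}"]) auto

lemma pdv_mono_mult:
  "pdv i (sg m a * sg n b) = pdv i (sg m a) * sg n b + sg m a * pdv i (sg n b)"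
proof -
  have L: "pdv i (sg m a * sg n b) = sg (m + n - sg i 1) (a*b*(of_nat (lk m i) + of_nat (lk n i)))"
    by (simp add: mult_single pdv_single lookup_add)
  have e1: "m - sg i 1 + n = m + n - sg i 1" if "lk m i > 0"
    using that by (intro poly_mapping_eqI) (auto simp: lookup_add lookup_minus lookup_single when_def)
  have e2: "m + (n - sg i 1) = m + n - sg i 1" if "lk n i > 0"
    using that by (intro poly_mapping_eqI) (auto simp: lookup_add lookup_minus lookup_single when_def)
  have lk: "lk (m+n) i = lk m i + lk n i" by (simp add: lookup_add)
  show ?thesis
  proof (cases "lk m i > 0"; cases "lk n i > 0")
    assume a1: "lk m i > 0" and a2: "lk n i > 0"
    show ?thesis unfolding L pdv_single mult_single using e1[OF a1] e2[OF a2]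
      by (simp add: add.commute[of "m - sg i 1"] flip: single_add) (simp add: algebra_simps lk)
  next
    assume a1: "lk m i > 0" and a2: "\<not> lk n i > 0"
    show ?thesis unfolding L pdv_single mult_single using e1[OF a1] a2
      by (simp add: add.commute[of "m - sg i 1"]) (simp add: algebra_simps lk)
  next
    assume a1: "\<not> lk m i > 0" and a2: "lk n i > 0"
    show ?thesis unfolding L pdv_single mult_single using e2[OF a2] a1
      by (simp) (simp add: algebra_simps lk)
  next
    assume a1: "\<not> lk m i > 0" and a2: "\<not> lk n i > 0"
    show ?thesis unfolding L pdv_single mult_single using a1 a2 by (simp add: lk)
  qed
qed

lemma pdv_mult: "pdv i (p * q) = pdv i p * q + p * pdv i q"
proof -
  have "pdv i (p * q) = pdv i ((\<Sum>m\<in>ky p. sg m (lk p m)) * (\<Sum>n\<in>ky q. sg n (lk q n)))"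
    by (simp add: pm_sum_single)
  also have "\<dots> = (\<Sum>m\<in>ky p. \<Sum>n\<in>ky q. pdv i (sg m (lk p m) * sg n (lk q n)))"
    by (simp add: sum_product pdv_sum)
  also have "\<dots> = (\<Sum>m\<in>ky p. \<Sum>n\<in>ky q. pdv i (sg m (lk p m)) * sg n (lk q n) + sg m (lk p m) * pdv i (sg n (lk q n)))"
    by (simp add: pdv_mono_mult)
  also have "\<dots> = pdv i ((\<Sum>m\<in>ky p. sg m (lk p m))) * (\<Sum>n\<in>ky q. sg n (lk q n)) + (\<Sum>m\<in>ky p. sg m (lk p m)) * pdv i (\<Sum>n\<in>ky q. sg n (lk q n))"
    by (simp add: sum.distrib sum_product pdv_sum)
  finally show ?thesis by (simp add: pm_sum_single)
qed

lemma finite_vars[simp]: "finite (vars p)"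
  by (simp add: vars_def)

lemma pdv_notin: "i \<notin> vars p \<Longrightarrow> pdv i p = 0"
  unfolding pdv_def vars_def
  by (rule sum.neutral) (auto simp: in_keys_iff)

lemma der_superset:
  assumes "finite S" "vars p \<subseteq> S"
  shows "derivation_of e p = (\<Sum>i\<in>S. e i * pdv i p)"
  unfolding derivation_of_def
  by (rule sum.mono_neutral_left) (use assms in \<open>auto simp: pdv_notin\<close>)

definition is_der :: "(dpoly \<Rightarrow> dpoly) \<Rightarrow> bool" where
  "is_der D \<longleftrightarrow> (\<forall>p q. D (p+q) = D p + D q) \<and> (\<forall>p q. D (p*q) = D p * q + p * D q)
     \<and> (\<forall>c. D (const c) = 0)"

lemma pdv_const[simp]: "pdv i (const c) = 0"
  by (simp add: const_def pdv_single)

lemma vars_kvar: "vars (kvar m) = {m}"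
  by (simp add: vars_def kvar_def)

lemma pdv_kvar_same: "pdv m (kvar m) = 1"
  by (simp add: kvar_def pdv_single)

lemma der_kvar[simp]: "derivation_of e (kvar m) = e m"
  by (simp add: derivation_of_def vars_kvar pdv_kvar_same)

lemma der_is_der: "is_der (derivation_of e)"
  unfolding is_der_def
proof (intro conjI allI)
  fix p q
  let ?S = "vars p \<union> vars q \<union> vars (p+q) \<union> vars (p*q)"
  have f: "finite ?S" by simp
  show "derivation_of e (p + q) = derivation_of e p + derivation_of e q"
    by (subst (1 2 3) der_superset[OF f]) (auto simp: pdv_add distrib_left sum.distrib)
  show "derivation_of e (p * q) = derivation_of e p * q + p * derivation_of e q"
    by (subst (1 2 3) der_superset[OF f])
       (auto simp: pdv_mult distrib_left sum.distrib sum_distrib_left sum_distrib_right algebra_simps)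
next
  fix c show "derivation_of e (const c) = 0"
    by (simp add: derivation_of_def)
qed

lemma kpow: "kvar i ^ n = sg (sg i n) 1"
proof (induction n)
  case 0 then show ?case by simp
next
  case (Suc n)
  have "sg i (Suc n) = sg i 1 + sg i n" by (simp flip: single_add)
  then show ?case using Suc by (simp add: kvar_def mult_single)
qed

lemma prod_single: "(\<Prod>i\<in>A. sg (g i) (1::real)) = sg (\<Sum>i\<in>A. g i) 1"
  by (induction A rule: infinite_finite_induct) (auto simp: mult_single)

lemma dpoly_induct:
  assumes C: "\<And>c. P (const c)" and K: "\<And>i. P (kvar i)"
    and A: "\<And>p q. P p \<Longrightarrow> P q \<Longrightarrow> P (p+q)" and M: "\<And>p q. P p \<Longrightarrow> P q \<Longrightarrow> P (p*q)"
  shows "P p"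
proof -
  have one: "P 1" using C[of 1] by (simp add: const_def)
  have zero: "P 0" using C[of 0] by (simp add: const_def)
  have pw: "P (kvar i ^ n)" for i n
    by (induction n) (auto simp: one K M)
  have pr: "P (\<Prod>i\<in>A. f i)" if "\<And>i. i \<in> A \<Longrightarrow> P (f i)" for A and f :: "nat \<Rightarrow> dpoly"
    using that by (induction A rule: infinite_finite_induct) (auto simp: one M)
  have sm: "P (\<Sum>i\<in>A. f i)" if "\<And>i. i \<in> A \<Longrightarrow> P (f i)" for A and f :: "(nat \<Rightarrow>\<^sub>0 nat) \<Rightarrow> dpoly"
    using that by (induction A rule: infinite_finite_induct) (auto simp: zero A)
  have mon: "P (sg m c)" for m c
  proof -
    have "sg m c = const c * (\<Prod>i\<in>ky m. kvar i ^ lk m i)"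
      by (simp add: kpow prod_single pm_sum_single const_def mult_single)
    then show ?thesis using C M pr pw by metis
  qed
  show ?thesis
    by (subst pm_sum_single[symmetric]) (rule sm, rule mon)
qed

lemma der_add: "is_der D \<Longrightarrow> D (p + q) = D p + D q" by (simp add: is_der_def)
lemma der_mult: "is_der D \<Longrightarrow> D (p * q) = D p * q + p * D q" by (simp add: is_der_def)
lemma der_const: "is_der D \<Longrightarrow> D (const c) = 0" by (simp add: is_der_def)
lemma der_zero: "is_der D \<Longrightarrow> D 0 = 0"
  using der_add[of D 0 0] by simp
lemma der_uminus: "is_der D \<Longrightarrow> D (- p) = - D p"
  using der_add[of D p "-p"] der_zero[of D] by (simp add: eq_neg_iff_add_eq_0 add.commute)
lemma der_diff: "is_der D \<Longrightarrow> D (p - q) = D p - D q"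
  using der_add[of D p "-q"] der_uminus[of D q] by simp
lemma der_cmult: "is_der D \<Longrightarrow> D (const c * p) = const c * D p"
  by (simp add: der_mult der_const)

lemma der_diff_is_der: "is_der D1 \<Longrightarrow> is_der D2 \<Longrightarrow> is_der (\<lambda>p. D1 p - D2 p)"
  unfolding is_der_def by (auto simp: algebra_simps)

lemma comm_is_der: "is_der D1 \<Longrightarrow> is_der D2 \<Longrightarrow> is_der (\<lambda>p. D1 (D2 p) - D2 (D1 p))"
  unfolding is_der_def by (auto simp: algebra_simps der_zero[unfolded is_der_def])

lemma der_zero_gen: "is_der D \<Longrightarrow> (\<And>i. D (kvar i) = 0) \<Longrightarrow> D p = 0"
  by (induction p rule: dpoly_induct) (auto simp: der_add der_mult der_const)

lemma der_ext: "is_der D1 \<Longrightarrow> is_der D2 \<Longrightarrow> (\<And>i. D1 (kvar i) = D2 (kvar i)) \<Longrightarrow> D1 p = D2 p"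
  using der_zero_gen[OF der_diff_is_der[of D1 D2]] by auto


lemma dd_is_der: "is_der dd" by (simp add: dd_def der_is_der)
lemma pa_is_der: "is_der (pa a)" by (simp add: pa_def der_is_der)
lemma Vact_is_der: "is_der (Vact G V)" by (simp add: Vact_def der_is_der)
lemma dd_kvar[simp]: "dd (kvar i) = kvar (Suc i)" by (simp add: dd_def)
lemma pa_kvar[simp]: "pa a (kvar i) = (dd ^^ i) a" by (simp add: pa_def)

lemma ddn_add: "(dd ^^ n) (a + b) = (dd ^^ n) a + (dd ^^ n) b"
  by (induction n) (auto simp: der_add[OF dd_is_der])
lemma ddn_diff: "(dd ^^ n) (a - b) = (dd ^^ n) a - (dd ^^ n) b"
  by (induction n) (auto simp: der_diff[OF dd_is_der])
lemma ddn_cmult: "(dd ^^ n) (const c * a) = const c * (dd ^^ n) a"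
  by (induction n) (auto simp: der_cmult[OF dd_is_der])

lemma pa_dd_comm: "dd (pa a p) = pa a (dd p)"
proof -
  have "dd (pa a p) - pa a (dd p) = 0"
    by (rule der_zero_gen[OF comm_is_der[OF dd_is_der pa_is_der], of a p]) simp
  then show ?thesis by simp
qed

lemma pa_ddn: "pa a ((dd ^^ m) b) = (dd ^^ m) (pa a b)"
  by (induction m) (auto simp flip: pa_dd_comm)

lemma pa_comm: "pa a (pa b p) - pa b (pa a p) = pa (pa a b - pa b a) p"
  by (rule der_ext[OF comm_is_der[OF pa_is_der pa_is_der] pa_is_der]) (simp add: pa_ddn ddn_diff)

lemma pa_add: "pa (a + b) p = pa a p + pa b p"
  by (simp add: pa_def derivation_of_def ddn_add distrib_right sum.distrib)

lemma pa_cmult: "pa (const c * a) p = const c * pa a p"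
  by (simp add: pa_def derivation_of_def ddn_cmult sum_distrib_left mult.assoc)

lemma Vact_kk: "Vact G V kk = Vk G V 0"
  by (simp add: Vact_def kk_def)

lemma Phi_eq: "Phi G V = pa (Vk G V 0)"
  by (simp add: Phi_def Vact_kk)

lemma TPG_rho: "V \<in> TPG \<Longrightarrow> rho V = 0"
  by (auto simp: TPG_def rho_def)

lemma Vk_rho0: "rho V = 0 \<Longrightarrow> Vk G V m = (dd ^^ m) (Vk G V 0)"
  by (induction m) auto

lemma Vact_TPG: "V \<in> TPG \<Longrightarrow> Vact G V = pa (Vk G V 0)"
proof -
  assume "V \<in> TPG"
  then have "Vk G V = (\<lambda>m. (dd ^^ m) (Vk G V 0))"
    by (intro ext Vk_rho0 TPG_rho)
  then show ?thesis unfolding Vact_def pa_def by metis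
qed

lemma dd_const[simp]: "dd (const c) = 0" using der_const[OF dd_is_der] .

lemma Vk0_add: "Vk G (fst V + fst W, snd V + snd W) 0 = Vk G V 0 + Vk G W 0"
  by (simp add: phi_def rho_def der_add[OF dd_is_der] algebra_simps)

lemma Vk0_cmult: "Vk G (const c * fst V, const c * snd V) 0 = const c * Vk G V 0"
  by (simp add: phi_def rho_def der_add[OF dd_is_der] der_diff[OF dd_is_der] der_cmult[OF dd_is_der] der_mult[OF dd_is_der] algebra_simps)


lemma bracket_Vk:
  assumes V: "V \<in> TPG" and W: "W \<in> TPG"
  shows "Vk G (bracket G V W) 0 = Vact G V (Vk G W 0) - Vact G W (Vk G V 0)"
proof -
  obtain f1 g1 where Vd: "V = (f1, g1)" by force
  obtain f2 g2 where Wd: "W = (f2, g2)" by force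
  have h1: "dd f1 = kk * g1" using V Vd by (simp add: TPG_def)
  have h2: "dd f2 = kk * g2" using W Wd by (simp add: TPG_def)
  define C where "C = const G"
  define D1 where "D1 = Vact G V"
  define D2 where "D2 = Vact G W"
  define A1 where "A1 = Vk G V 0"
  define A2 where "A2 = Vk G W 0"
  define p1 where "p1 = phi V"
  define p2 where "p2 = phi W"
  have dD1: "is_der D1" "is_der D2" unfolding D1_def D2_def by (rule Vact_is_der)+
  note d1 = der_add[OF dD1(1)] der_diff[OF dD1(1)] der_mult[OF dD1(1)]
  note d2 = der_add[OF dD1(2)] der_diff[OF dD1(2)] der_mult[OF dD1(2)]
  note d0 = der_add[OF dd_is_der] der_diff[OF dd_is_der] der_mult[OF dd_is_der]
  have C1: "D1 C = 0" "D2 C = 0" "dd C = 0" unfolding C_def using der_const dD1 by auto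
  have c1: "D1 (dd x) = dd (D1 x)" for x unfolding D1_def Vact_TPG[OF V] by (simp add: pa_dd_comm)
  have c2: "D2 (dd x) = dd (D2 x)" for x unfolding D2_def Vact_TPG[OF W] by (simp add: pa_dd_comm)
  have k1: "D1 kk = A1" unfolding D1_def A1_def by (rule Vact_kk)
  have k2: "D2 kk = A2" unfolding D2_def A2_def by (rule Vact_kk)
  have p1e: "p1 = dd g1 + kk * f1" unfolding p1_def Vd by (simp add: phi_def)
  have p2e: "p2 = dd g2 + kk * f2" unfolding p2_def Wd by (simp add: phi_def)
  have r1: "rho V = 0" "rho W = 0" using V W by (simp_all add: TPG_rho)
  have a1: "dd p1 = A1 - C * g1" unfolding A1_def p1_def C_def using r1 Vd by simp
  have a2: "dd p2 = A2 - C * g2" unfolding A2_def p2_def C_def using r1 Wd by simp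
  define F where "F = (D1 f2 - g2 * p1) - (D2 f1 - g1 * p2)"
  define Gb where "Gb = (D1 g2 + f2 * p1) - (D2 g1 + f1 * p2)"
  have B: "bracket G V W = (F, Gb)"
    unfolding bracket_def DV_def F_def Gb_def D1_def D2_def p1_def p2_def Vd Wd by simp
  have c1': "dd (D1 x) = D1 (dd x)" for x using c1 by simp
  have c2': "dd (D2 x) = D2 (dd x)" for x using c2 by simp
  have dF: "dd F = A1*g2 + kk*D1 g2 - dd g2 * p1 - g2*(A1 - C*g1) - (A2*g1 + kk*D2 g1 - dd g1*p2 - g1*(A2 - C*g2))"
    unfolding F_def by (simp add: d0 c1' c2' d1 d2 k1 k2 h1 h2 a1 a2)
  have rB: "dd F - kk * Gb = 0"
    unfolding dF Gb_def p1e p2e by (simp add: algebra_simps)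
  have dG: "dd Gb = D1 (dd g2) + kk*g2*p1 + f2*(A1 - C*g1) - (D2 (dd g1) + kk*g1*p2 + f1*(A2 - C*g2))"
    unfolding Gb_def by (simp add: d0 c1' c2' h1 h2 a1 a2)
  have e1: "D1 p2 = D1 (dd g2) + A1 * f2 + kk * D1 f2"
    unfolding p2e by (simp add: d1 k1)
  have e2: "D2 p1 = D2 (dd g1) + A2 * f1 + kk * D2 f1"
    unfolding p1e by (simp add: d2 k2)
  have pB: "dd Gb + kk * F = D1 p2 - D2 p1 - C * g1 * f2 + C * g2 * f1"
    unfolding dG F_def e1 e2 by (simp add: algebra_simps)
  have "Vk G (bracket G V W) 0 = dd (D1 p2 - D2 p1 - C * g1 * f2 + C * g2 * f1) + C * Gb"
    using rB pB unfolding B by (simp add: phi_def rho_def C_def)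
  also have "\<dots> = D1 A2 - D2 A1"
  proof -
    have "A1 = dd p1 + C * g1" "A2 = dd p2 + C * g2" using a1 a2 by simp_all
    then have "D1 A2 - D2 A1 = dd (D1 p2) + C * D1 g2 - dd (D2 p1) - C * D2 g1"
      by (simp add: d1 d2 c1 c2 C1)
    moreover have "dd (D1 p2 - D2 p1 - C * g1 * f2 + C * g2 * f1) + C * Gb = dd (D1 p2) + C * D1 g2 - dd (D2 p1) - C * D2 g1"
      unfolding Gb_def by (simp add: d0 C1 h1 h2 p1e p2e algebra_simps)
    ultimately show ?thesis by simp
  qed
  finally show ?thesis unfolding D1_def D2_def A1_def A2_def .
qed

theorem proposition4p2:
  fixes G :: real
  shows "(\<forall>V\<in>TPG. \<forall>W\<in>TPG.
            Phi G (fst V + fst W, snd V + snd W) = (\<lambda>p. Phi G V p + Phi G W p))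
       \<and> (\<forall>V\<in>TPG. \<forall>c::real.
            Phi G (const c * fst V, const c * snd V) = (\<lambda>p. const c * Phi G V p))
       \<and> (\<forall>V\<in>TPG. \<forall>W\<in>TPG.
            Phi G (bracket G V W) = (\<lambda>p. Phi G V (Phi G W p) - Phi G W (Phi G V p)))"
proof (intro conjI ballI allI)
  fix V W assume "V \<in> TPG" "W \<in> TPG"
  show "Phi G (fst V + fst W, snd V + snd W) = (\<lambda>p. Phi G V p + Phi G W p)"
    unfolding Phi_eq Vk0_add by (rule ext) (simp only: pa_add)
  show "Phi G (bracket G V W) = (\<lambda>p. Phi G V (Phi G W p) - Phi G W (Phi G V p))"
  proof (rule ext)
    fix p
    have "Phi G (bracket G V W) p = pa (Vact G V (Vk G W 0) - Vact G W (Vk G V 0)) p"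
      by (simp only: Phi_eq bracket_Vk[OF \<open>V \<in> TPG\<close> \<open>W \<in> TPG\<close>])
    also have "\<dots> = pa (pa (Vk G V 0) (Vk G W 0) - pa (Vk G W 0) (Vk G V 0)) p"
      by (simp only: Vact_TPG[OF \<open>V \<in> TPG\<close>] Vact_TPG[OF \<open>W \<in> TPG\<close>])
    also have "\<dots> = Phi G V (Phi G W p) - Phi G W (Phi G V p)"
      by (simp only: Phi_eq pa_comm)
    finally show "Phi G (bracket G V W) p = Phi G V (Phi G W p) - Phi G W (Phi G V p)" .
  qed
next
  fix V c assume "V \<in> TPG"
  show "Phi G (const c * fst V, const c * snd V) = (\<lambda>p. const c * Phi G V p)"
    unfolding Phi_eq Vk0_cmult by (rule ext) (simp only: pa_cmult)
qed

end
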